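(* Let $\sigma\colon\Gamma\to2^V$ be a quasi-geometric homology triangulation of a simplex, $E$ a face of $\Gamma$ with $|V|-|\sigma(E)|=1$, and $L(\Gamma,E)$ the local face module with respect to a special l.s.o.p. Let $\Delta\subset\mathrm{lk}_\Gamma(E)$ be a subcomplex. Then $$\dim_k\big(L(\Gamma,E)|_\Delta\big)_1\ge|\{v\text{ a vertex of }\Delta:\{v\}\sqcup E\text{ interior}\}|-1.$$
   Context: Fix an infinite field $k$; homology is with coefficients in $k$. A $d$-dimensional simplicial complex $\Gamma$ with trivial reduced homology is a homology ball of dimension $d$ if there is a subcomplex $\partial\Gamma$ such that $\partial\Gamma$ is a homology sphere of dimension $d-1$, $\mathrm{lk}_\Gamma(F)$ is a homology sphere of dimension $d-|F|$ for $F\notin\partial\Gamma$, and $\mathrm{lk}_\Gamma(F)$ is a homology ball of dimension $d-|F|$ for nonempty $F\in\partial\Gamma$; its interior faces are those not in $\partial\Gamma$. A homology triangulation of $2^V$ is a finite simplicial complex $\Gamma$ with $\sigma\colon\Gamma\to2^V$ such that for every nonempty $U\subset V$, $\Gamma_U:=\sigma^{-1}(2^U)$ is a homology ball of dimension $|U|-1$ whose interior faces are exactly $\sigma^{-1}(U)$. $\sigma(F)$ is the carrier; $\sigma(w)=\sigma(\{w\})$. It is quasi-geometric if there is no face $F$ and $U\subset V$ with $\dim\Gamma_U<\dim F$ and $\sigma(w)\subset U$ for all vertices $w\in F$. A face $G$ is interior if $\sigma(G)=V$. $k[\Delta]$ is the face ring (variables $x_w$, $x^F=\prod_{w\in F}x_w$),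 graded by degree; the restriction map $k[\mathrm{lk}_\Gamma(E)]\to k[\Delta]$ sends $x^G$ to $x^G$ if $G\in\Delta$ and $0$ otherwise, and $M|_\Delta:=M\otimes_{k[\mathrm{lk}_\Gamma(E)]}k[\Delta]$. An l.s.o.p. for a finitely generated graded $k$-algebra of Krull dimension $d$ is a sequence of $d$ degree-one elements with finite-dimensional quotient; an l.s.o.p. $\theta_1,\ldots,\theta_d$ of $k[\mathrm{lk}_\Gamma(E)]$ ($d=|V|-|E|$) is special if for each $v\in V\smallsetminus\sigma(E)$ there is an element $\theta_v$ of it supported on vertices $w$ with $v\in\sigma(w)$, distinct for distinct $v$. $L(\Gamma,E)$ is the image of $(x^G:G\in\mathrm{lk}_\Gamma(E),\ G\sqcup E\text{ interior})$ in $k[\mathrm{lk}_\Gamma(E)]/(\theta_1,\ldots,\theta_d)$. *)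

theory Defs
  imports Main "HOL.Vector_Spaces" "HOL-Library.Poly_Mapping" "HOL-Library.Function_Algebras"
begin

definition simplicial_complex :: "'w set set \<Rightarrow> bool" where
  "simplicial_complex D \<longleftrightarrow> finite D \<and> (\<forall>F\<in>D. finite F) \<and> (\<forall>F\<in>D. \<forall>G. G \<subseteq> F \<longrightarrow> G \<in> D)"

definition lk :: "'w set set \<Rightarrow> 'w set \<Rightarrow> 'w set set" where
  "lk D F = {G \<in> D. G \<inter> F = {} \<and> G \<union> F \<in> D}"

definition verts :: "'w set set \<Rightarrow> 'w set" where
  "verts D = {w. {w} \<in> D}"

definition cdim :: "'w set set \<Rightarrow> int" where
  "cdim D = Max ((\<lambda>F. int (card F) - 1) ` D)"

definition fscale :: "'k::field \<Rightarrow> ('a \<Rightarrow> 'k) \<Rightarrow> ('a \<Rightarrow> 'k)" where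
  "fscale c f = (\<lambda>x. c * f x)"

text \<open>Simplicial i-chains (i \<ge> -1), the (-1)-chains being multiples of the empty face.\<close>
definition chains :: "'w set set \<Rightarrow> int \<Rightarrow> ('w set \<Rightarrow> 'k::field) set" where
  "chains D i = {f. \<forall>G. f G \<noteq> 0 \<longrightarrow> G \<in> D \<and> int (card G) = i + 1}"

text \<open>Simplicial boundary, faces oriented by the linear order on vertices.\<close>
definition bd :: "'w::linorder set set \<Rightarrow> ('w set \<Rightarrow> 'k::field) \<Rightarrow> ('w set \<Rightarrow> 'k)" where
  "bd D f = (\<lambda>G. \<Sum>v\<in>{v. v \<notin> G \<and> insert v G \<in> D}.
                 (-1) ^ card {u\<in>G. u < v} * f (insert v G))"

definition rbetti :: "'k::field itself \<Rightarrow> 'w::linorder set set \<Rightarrow> int \<Rightarrow> nat" where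
  "rbetti _ D i =
     vector_space.dim (fscale :: 'k \<Rightarrow> _) {f :: 'w set \<Rightarrow> 'k. f \<in> chains D i \<and> bd D f = 0}
   - vector_space.dim (fscale :: 'k \<Rightarrow> _) (bd D ` (chains D (i + 1) :: ('w set \<Rightarrow> 'k) set))"

definition hsphere :: "'k::field itself \<Rightarrow> 'w::linorder set set \<Rightarrow> int \<Rightarrow> bool" where
  "hsphere K D d \<longleftrightarrow> simplicial_complex D \<and> {} \<in> D \<and>
     (\<forall>F\<in>D. \<forall>i. rbetti K (lk D F) i = (if i = d - int (card F) then 1 else 0))"

text \<open>hball_bd K G B d: G is a homology ball of dimension d with boundary complex B.\<close>
inductive hball_bd :: "'k::field itself \<Rightarrow> 'w::linorder set set \<Rightarrow> 'w set set \<Rightarrow> int \<Rightarrow> bool"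
  for K :: "'k itself" where
  "\<lbrakk> simplicial_complex G; {} \<in> G; cdim G = d; \<forall>i. rbetti K G i = 0;
     B \<subseteq> G; hsphere K B (d - 1);
     \<forall>F\<in>G - B. hsphere K (lk G F) (d - int (card F));
     \<forall>F\<in>B. F \<noteq> {} \<longrightarrow> (\<exists>B'. hball_bd K (lk G F) B' (d - int (card F))) \<rbrakk>
   \<Longrightarrow> hball_bd K G B d"

definition restr :: "'w set set \<Rightarrow> ('w set \<Rightarrow> 'v set) \<Rightarrow> 'v set \<Rightarrow> 'w set set" where
  "restr G \<sigma> U = {F \<in> G. \<sigma> F \<subseteq> U}"

definition htriang :: "'k::field itself \<Rightarrow> 'w::linorder set set \<Rightarrow> ('w set \<Rightarrow> 'v set) \<Rightarrow> 'v set \<Rightarrow> bool" where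
  "htriang K G \<sigma> V \<longleftrightarrow> finite V \<and> simplicial_complex G \<and> (\<forall>F\<in>G. \<sigma> F \<subseteq> V) \<and>
     (\<forall>U. U \<subseteq> V \<longrightarrow> U \<noteq> {} \<longrightarrow>
        (\<exists>B. hball_bd K (restr G \<sigma> U) B (int (card U) - 1) \<and>
             restr G \<sigma> U - B = {F \<in> G. \<sigma> F = U}))"

definition quasi_geometric :: "'w set set \<Rightarrow> ('w set \<Rightarrow> 'v set) \<Rightarrow> 'v set \<Rightarrow> bool" where
  "quasi_geometric G \<sigma> V \<longleftrightarrow>
     \<not> (\<exists>F\<in>G. \<exists>U. U \<subseteq> V \<and> cdim (restr G \<sigma> U) < int (card F) - 1 \<and> (\<forall>w\<in>F. \<sigma> {w} \<subseteq> U))"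

type_synonym ('w, 'k) mpoly = "('w \<Rightarrow>\<^sub>0 nat) \<Rightarrow>\<^sub>0 'k"

definition pscale :: "'k::field \<Rightarrow> ('w, 'k) mpoly \<Rightarrow> ('w, 'k) mpoly" where
  "pscale c p = Poly_Mapping.map (\<lambda>x. c * x) p"

definition xvar :: "'w \<Rightarrow> ('w, 'k::field) mpoly" where
  "xvar w = Poly_Mapping.single (Poly_Mapping.single w 1) 1"

definition xmon :: "'w set \<Rightarrow> ('w, 'k::field) mpoly" where
  "xmon G = (\<Prod>w\<in>G. xvar w)"

definition polyring :: "'w set \<Rightarrow> ('w, 'k::field) mpoly set" where
  "polyring W = {p :: ('w, 'k) mpoly. \<forall>a\<in>Poly_Mapping.keys p. Poly_Mapping.keys a \<subseteq> W}"

text \<open>Stanley--Reisner ideal of D inside k[x_w : w \<in> W]: spanned by the monomials whose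
  support is not a face of D; k[D] = polyring W / SR D W for W = verts D.\<close>
definition SR :: "'w set set \<Rightarrow> 'w set \<Rightarrow> ('w, 'k::field) mpoly set" where
  "SR D W = {p \<in> polyring W. \<forall>a\<in>Poly_Mapping.keys p. Poly_Mapping.keys a \<notin> D}"

definition ideal_gen :: "'a::comm_ring_1 set \<Rightarrow> 'a set \<Rightarrow> 'a set" where
  "ideal_gen R X = {(\<Sum>x\<in>F. c x * x) | c F. finite F \<and> F \<subseteq> X \<and> (\<forall>x\<in>F. c x \<in> R)}"

definition ideal_prod :: "'a::comm_ring_1 set \<Rightarrow> 'a set \<Rightarrow> 'a set \<Rightarrow> 'a set" where
  "ideal_prod R I J = ideal_gen R {a * b | a b. a \<in> I \<and> b \<in> J}"

definition setsum :: "'a::ab_group_add set \<Rightarrow> 'a set \<Rightarrow> 'a set" where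
  "setsum A B = {a + b | a b. a \<in> A \<and> b \<in> B}"

definition homog :: "nat \<Rightarrow> ('w, 'k::field) mpoly \<Rightarrow> bool" where
  "homog n p \<longleftrightarrow> (\<forall>a\<in>Poly_Mapping.keys p. (\<Sum>i\<in>Poly_Mapping.keys a. Poly_Mapping.lookup a i) = n)"

definition degpart :: "('w, 'k::field) mpoly set \<Rightarrow> nat \<Rightarrow> ('w, 'k) mpoly set" where
  "degpart P n = {p \<in> P. homog n p}"

definition pdim :: "('w, 'k::field) mpoly set \<Rightarrow> nat" where
  "pdim P = vector_space.dim pscale P"

text \<open>theta is an l.s.o.p. of polyring W / I of length d: d degree-one elements such that
  the quotient by I + (theta) is a finite-dimensional k-vector space.\<close>
definition is_lsop :: "'w set \<Rightarrow> ('w, 'k::field) mpoly set \<Rightarrow> ('w, 'k) mpoly list \<Rightarrow> nat \<Rightarrow> bool" where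
  "is_lsop W I th d \<longleftrightarrow> length th = d \<and> (\<forall>t\<in>set th. t \<in> degpart (polyring W) 1) \<and>
     (\<exists>B. finite B \<and> B \<subseteq> polyring W \<and>
        (\<forall>p\<in>polyring W. \<exists>q\<in>module.span pscale B.
            p - q \<in> setsum I (ideal_gen (polyring W) (set th))))"

text \<open>l.s.o.p. of k[lk_G(E)] (Krull dimension |V| - |E|).\<close>
definition lsop_lk :: "'w set set \<Rightarrow> 'v set \<Rightarrow> 'w set \<Rightarrow> ('w, 'k::field) mpoly list \<Rightarrow> bool" where
  "lsop_lk G V E th \<longleftrightarrow>
     is_lsop (verts (lk G E)) (SR (lk G E) (verts (lk G E))) th (card V - card E)"

definition special :: "('w set \<Rightarrow> 'v set) \<Rightarrow> 'v set \<Rightarrow> 'w set \<Rightarrow> ('w, 'k::field) mpoly list \<Rightarrow> bool" where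
  "special \<sigma> V E th \<longleftrightarrow> (\<exists>f. inj_on f (V - \<sigma> E) \<and>
     (\<forall>v\<in>V - \<sigma> E. f v < length th \<and>
        (\<forall>a\<in>Poly_Mapping.keys (th ! f v). \<exists>w. a = Poly_Mapping.single w 1 \<and> v \<in> \<sigma> {w})))"

text \<open>With R = polyring W (W = verts(lk E)), N = SR(lk E) + (theta) so that
  k[lk E]/(theta) = R/N, and J the ideal generated by the x^G with G \<sqcup> E interior:
  L(G,E) = (J + N)/N.  The kernel of k[lk E] \<rightarrow> k[D] is the image of SR D W, hence
  L|_D = L \<otimes> k[lk E]/ker = L / ker\<cdot>L = (J + N)/(SR D W \<cdot> J + N).
  loc_restr_dim1 is dim_k of the degree-one component of this graded module.\<close>
definition lfm_N :: "'w set set \<Rightarrow> 'w set \<Rightarrow> ('w, 'k::field) mpoly list \<Rightarrow> ('w, 'k) mpoly set" where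
  "lfm_N G E th = setsum (SR (lk G E) (verts (lk G E))) (ideal_gen (polyring (verts (lk G E))) (set th))"

definition lfm_J :: "'w set set \<Rightarrow> ('w set \<Rightarrow> 'v set) \<Rightarrow> 'v set \<Rightarrow> 'w set \<Rightarrow> ('w, 'k::field) mpoly set" where
  "lfm_J G \<sigma> V E = ideal_gen (polyring (verts (lk G E)))
      {xmon F | F. F \<in> lk G E \<and> \<sigma> (F \<union> E) = V}"

definition loc_restr_dim1 :: "'w set set \<Rightarrow> ('w set \<Rightarrow> 'v set) \<Rightarrow> 'v set \<Rightarrow> 'w set
     \<Rightarrow> ('w, 'k::field) mpoly list \<Rightarrow> 'w set set \<Rightarrow> nat" where
  "loc_restr_dim1 G \<sigma> V E th D =
     pdim (degpart (setsum (lfm_J G \<sigma> V E) (lfm_N G E th)) 1)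
   - pdim (degpart (setsum (ideal_prod (polyring (verts (lk G E))) (SR D (verts (lk G E)))
                              (lfm_J G \<sigma> V E)) (lfm_N G E th)) 1)"

end

theory Submission
  imports Defs "HOL-Computational_Algebra.Polynomial"
begin


lemma lookup_pscale: "Poly_Mapping.lookup (pscale c p) m = c * Poly_Mapping.lookup p m"
  unfolding pscale_def by transfer (auto simp: when_def)

lemma pscale_conv: "pscale c p = Poly_Mapping.single 0 c * p"
  unfolding pscale_def by (rule mult_map_scale_conv_mult)

interpretation pv: vector_space "pscale :: 'k::field \<Rightarrow> ('w, 'k) mpoly \<Rightarrow> _"
  by unfold_locales (auto simp: pscale_conv algebra_simps single_add mult_single)

definition mdeg :: "('w \<Rightarrow>\<^sub>0 nat) \<Rightarrow> nat" where
  "mdeg m = sum (Poly_Mapping.lookup m) (Poly_Mapping.keys m)"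

lemma mdeg_add: "mdeg (m + n) = mdeg m + mdeg n"
  unfolding mdeg_def
  by (rule setsum_keys_plus_distrib[where f = "\<lambda>k v. v", simplified])

lemma mdeg_zero_iff: "mdeg m = 0 \<longleftrightarrow> m = 0"
  proof
  assume "mdeg m = 0"
  then have "\<forall>k\<in>Poly_Mapping.keys m. Poly_Mapping.lookup m k = 0" unfolding mdeg_def by simp
  then show "m = 0" by (metis in_keys_iff lookup_zero poly_mapping_eqI)
qed (simp add: mdeg_def)

lemma mdeg_single: "mdeg (Poly_Mapping.single w n) = n"
  unfolding mdeg_def by simp

lemma mdeg_one_single:
  assumes "mdeg m = 1" shows "\<exists>w. m = Poly_Mapping.single w 1"
proof -
  have "Poly_Mapping.keys m \<noteq> {}" using assms unfolding mdeg_def by (metis sum.empty zero_neq_one)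
  then obtain w where w: "w \<in> Poly_Mapping.keys m" by blast
  have "1 = Poly_Mapping.lookup m w + sum (Poly_Mapping.lookup m) (Poly_Mapping.keys m - {w})"
    using assms w unfolding mdeg_def by (metis finite_keys sum.remove)
  moreover have "Poly_Mapping.lookup m w \<ge> 1" using w by (simp add: in_keys_iff)
  ultimately have l: "Poly_Mapping.lookup m w = 1" and r: "sum (Poly_Mapping.lookup m) (Poly_Mapping.keys m - {w}) = 0"
    by linarith+
  have "Poly_Mapping.keys m - {w} = {}"
  proof (rule ccontr)
    assume "Poly_Mapping.keys m - {w} \<noteq> {}"
    then obtain u where u: "u \<in> Poly_Mapping.keys m - {w}" by blast
    then have "Poly_Mapping.lookup m u \<le> sum (Poly_Mapping.lookup m) (Poly_Mapping.keys m - {w})"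
      by (intro member_le_sum) auto
    moreover have "Poly_Mapping.lookup m u > 0" using u by (simp add: in_keys_iff)
    ultimately show False using r by linarith
  qed
  then have K: "Poly_Mapping.keys m = {w}" using w by blast
  have "m = Poly_Mapping.single w 1"
  proof (rule poly_mapping_eqI)
    fix k show "Poly_Mapping.lookup m k = Poly_Mapping.lookup (Poly_Mapping.single w 1) k"
    proof (cases "k = w")
      case True then show ?thesis using l by simp
    next
      case False then have "k \<notin> Poly_Mapping.keys m" using K by blast
      then show ?thesis using False by (simp add: in_keys_iff lookup_single_not_eq)
    qed
  qed
  then show ?thesis by blast
qed


lemma pm_expand: "p = (\<Sum>m\<in>Poly_Mapping.keys p. Poly_Mapping.single m (Poly_Mapping.lookup p m))"
proof (rule poly_mapping_eqI)
  fix k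
  have "Poly_Mapping.lookup (\<Sum>m\<in>Poly_Mapping.keys p. Poly_Mapping.single m (Poly_Mapping.lookup p m)) k
      = (\<Sum>m\<in>Poly_Mapping.keys p. (if m = k then Poly_Mapping.lookup p m else 0))"
    by (simp add: lookup_sum lookup_single when_def)
  also have "\<dots> = Poly_Mapping.lookup p k"
    by (simp add: in_keys_iff)
  finally show "Poly_Mapping.lookup p k = Poly_Mapping.lookup (\<Sum>m\<in>Poly_Mapping.keys p. Poly_Mapping.single m (Poly_Mapping.lookup p m)) k"
    by simp
qed

definition emon :: "('w \<Rightarrow> 'k::field) \<Rightarrow> ('w \<Rightarrow>\<^sub>0 nat) \<Rightarrow> 'k poly" where
  "emon a m = monom (\<Prod>w\<in>Poly_Mapping.keys m. a w ^ Poly_Mapping.lookup m w) (mdeg m)"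

lemma emon_prod_superset:
  assumes "finite T" "Poly_Mapping.keys m \<subseteq> T"
  shows "(\<Prod>w\<in>Poly_Mapping.keys m. a w ^ Poly_Mapping.lookup m w) = (\<Prod>w\<in>T. a w ^ Poly_Mapping.lookup m w)"
  by (rule prod.mono_neutral_left[OF assms(1) assms(2)]) (simp add: in_keys_iff)

lemma emon_add: "emon a (m + n) = emon a m * emon a n"
proof -
  let ?T = "Poly_Mapping.keys m \<union> Poly_Mapping.keys n"
  have fT: "finite ?T" by simp
  have "(\<Prod>w\<in>Poly_Mapping.keys (m + n). a w ^ Poly_Mapping.lookup (m + n) w)
      = (\<Prod>w\<in>?T. a w ^ Poly_Mapping.lookup (m + n) w)"
    by (rule emon_prod_superset[OF fT keys_add])
  also have "\<dots> = (\<Prod>w\<in>?T. a w ^ Poly_Mapping.lookup m w) * (\<Prod>w\<in>?T. a w ^ Poly_Mapping.lookup n w)"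
    by (simp add: lookup_add power_add prod.distrib)
  also have "\<dots> = (\<Prod>w\<in>Poly_Mapping.keys m. a w ^ Poly_Mapping.lookup m w) * (\<Prod>w\<in>Poly_Mapping.keys n. a w ^ Poly_Mapping.lookup n w)"
    using emon_prod_superset[OF fT, of m a] emon_prod_superset[OF fT, of n a] by simp
  finally show ?thesis unfolding emon_def by (simp add: mult_monom mdeg_add)
qed

lemma emon_zero [simp]: "emon a 0 = 1"
  unfolding emon_def mdeg_def by (simp add: monom_0 one_pCons)

definition ev :: "('w \<Rightarrow> 'k::field) \<Rightarrow> ('w, 'k) mpoly \<Rightarrow> 'k poly" where
  "ev a p = (\<Sum>m\<in>Poly_Mapping.keys p. smult (Poly_Mapping.lookup p m) (emon a m))"

lemma ev_add: "ev a (p + q) = ev a p + ev a q"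
  unfolding ev_def
  by (rule setsum_keys_plus_distrib[where f = "\<lambda>m c. smult c (emon a m)"]) (simp_all add: smult_add_left)

lemma ev_zero [simp]: "ev a 0 = 0"
  unfolding ev_def by simp

lemma ev_single: "ev a (Poly_Mapping.single m c) = smult c (emon a m)"
  unfolding ev_def by (cases "c = 0") simp_all

lemma ev_sum: "ev a (sum f S) = (\<Sum>i\<in>S. ev a (f i))"
  by (induction S rule: infinite_finite_induct) (simp_all add: ev_add)

lemma ev_diff: "ev a (p - q) = ev a p - ev a q"
proof -
  have "ev a p = ev a (p - q + q)" by simp
  also have "\<dots> = ev a (p - q) + ev a q" by (rule ev_add)
  finally show ?thesis by simp
qed

lemma ev_mult: "ev a (p * q) = ev a p * ev a q"
proof -
  let ?P = "Poly_Mapping.keys p" and ?Q = "Poly_Mapping.keys q"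
  have "p * q = (\<Sum>m\<in>?P. Poly_Mapping.single m (Poly_Mapping.lookup p m)) * (\<Sum>n\<in>?Q. Poly_Mapping.single n (Poly_Mapping.lookup q n))"
    using pm_expand[of p] pm_expand[of q] by simp
  also have "\<dots> = (\<Sum>m\<in>?P. \<Sum>n\<in>?Q. Poly_Mapping.single (m + n) (Poly_Mapping.lookup p m * Poly_Mapping.lookup q n))"
    by (simp add: sum_product mult_single)
  finally have "ev a (p * q) = (\<Sum>m\<in>?P. \<Sum>n\<in>?Q. smult (Poly_Mapping.lookup p m * Poly_Mapping.lookup q n) (emon a (m + n)))"
    by (simp add: ev_sum ev_single)
  also have "\<dots> = (\<Sum>m\<in>?P. \<Sum>n\<in>?Q. smult (Poly_Mapping.lookup p m) (emon a m) * smult (Poly_Mapping.lookup q n) (emon a n))"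
    by (simp add: emon_add mult.commute mult.left_commute)
  also have "\<dots> = ev a p * ev a q"
    unfolding ev_def by (simp add: sum_product)
  finally show ?thesis .
qed

lemma ev_one [simp]: "ev a 1 = 1"
proof -
  have "ev a (Poly_Mapping.single 0 1) = 1" by (simp only: ev_single emon_zero) simp
  then show ?thesis by simp
qed

lemma ev_power: "ev a (p ^ n) = ev a p ^ n"
  by (induction n) (simp_all add: ev_mult)

lemma ev_pscale: "ev a (pscale c p) = smult c (ev a p)"
  by (simp add: pscale_conv ev_mult ev_single)


lemma keys_pscale: "Poly_Mapping.keys (pscale c p) \<subseteq> Poly_Mapping.keys p"
  by (auto simp: in_keys_iff lookup_pscale)

lemma xvar_power: "(xvar w :: ('w, 'k::field) mpoly) ^ n = Poly_Mapping.single (Poly_Mapping.single w n) 1"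
  by (induction n) (simp_all add: xvar_def mult_single flip: single_add)

lemma emon_var: "emon a (Poly_Mapping.single w n) = monom (a w ^ n) n"
  unfolding emon_def by (cases "n = 0") (simp_all add: mdeg_single monom_0 one_pCons mdeg_def)

lemma ev_xvar_power: "ev a ((xvar w :: ('w, 'k::field) mpoly) ^ n) = monom (a w ^ n) n"
  by (simp add: xvar_power ev_single emon_var)

lemma ev_xvar: "ev a (xvar w :: ('w, 'k::field) mpoly) = monom (a w) 1"
  using ev_xvar_power[of a w 1] by simp

lemma polyring_zero [simp]: "0 \<in> polyring W"
  by (simp add: polyring_def)

lemma polyring_one [simp]: "1 \<in> polyring W"
  by (simp add: polyring_def)

lemma polyring_add: "p \<in> polyring W \<Longrightarrow> q \<in> polyring W \<Longrightarrow> p + q \<in> polyring W"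
  unfolding polyring_def using keys_add[of p q] by blast

lemma polyring_mult:
  assumes pp: "p \<in> polyring W" and qq: "q \<in> polyring W" shows "p * q \<in> polyring W"
  unfolding polyring_def
proof (intro CollectI ballI)
  fix m
  have p: "\<forall>a\<in>Poly_Mapping.keys p. Poly_Mapping.keys a \<subseteq> W" using pp by (simp add: polyring_def)
  have q: "\<forall>a\<in>Poly_Mapping.keys q. Poly_Mapping.keys a \<subseteq> W" using qq by (simp add: polyring_def)
  assume m: "m \<in> Poly_Mapping.keys (p * q)"
  then obtain a b where "m = a + b" "a \<in> Poly_Mapping.keys p" "b \<in> Poly_Mapping.keys q"
    using keys_mult[of p q] by blast
  then show "Poly_Mapping.keys m \<subseteq> W" using p q keys_add[of a b] by blast
qed

lemma polyring_sum: "(\<And>i. i \<in> S \<Longrightarrow> f i \<in> polyring W) \<Longrightarrow> sum f S \<in> polyring W"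
  by (induction S rule: infinite_finite_induct) (simp_all add: polyring_add)

lemma polyring_pscale: "p \<in> polyring W \<Longrightarrow> pscale c p \<in> polyring W"
  unfolding polyring_def using keys_pscale by blast

lemma polyring_xvar: "w \<in> W \<Longrightarrow> xvar w \<in> polyring W"
  by (simp add: polyring_def xvar_def)

lemma polyring_power: "p \<in> polyring W \<Longrightarrow> p ^ n \<in> polyring W"
  by (induction n) (simp_all add: polyring_mult)

subsection \<open>Low degree bounds\<close>

definition Pge :: "nat \<Rightarrow> ('w, 'k::field) mpoly \<Rightarrow> bool" where
  "Pge k p \<longleftrightarrow> (\<forall>m\<in>Poly_Mapping.keys p. mdeg m \<ge> k)"

lemma Pge_0 [simp]: "Pge 0 p"
  by (simp add: Pge_def)

lemma Pge_zero [simp]: "Pge k 0"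
  by (simp add: Pge_def)

lemma Pge_add: "Pge k p \<Longrightarrow> Pge k q \<Longrightarrow> Pge k (p + q)"
  unfolding Pge_def using keys_add[of p q] by blast

lemma Pge_sum: "(\<And>i. i \<in> S \<Longrightarrow> Pge k (f i)) \<Longrightarrow> Pge k (sum f S)"
  by (induction S rule: infinite_finite_induct) (simp_all add: Pge_add)

lemma Pge_mult:
  assumes pp: "Pge k p" and qq: "Pge l q" shows "Pge (k + l) (p * q)"
  unfolding Pge_def
proof
  fix m
  have p: "\<forall>a\<in>Poly_Mapping.keys p. k \<le> mdeg a" using pp by (simp add: Pge_def)
  have q: "\<forall>a\<in>Poly_Mapping.keys q. l \<le> mdeg a" using qq by (simp add: Pge_def)
  assume m: "m \<in> Poly_Mapping.keys (p * q)"
  then obtain a b where "m = a + b" "a \<in> Poly_Mapping.keys p" "b \<in> Poly_Mapping.keys q"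
    using keys_mult[of p q] by blast
  then show "k + l \<le> mdeg m" using p q by (simp add: mdeg_add add_mono)
qed

lemma Pge_1_iff: "Pge 1 p \<longleftrightarrow> Poly_Mapping.lookup p 0 = 0"
proof
  assume "Pge 1 p"
  then have "0 \<notin> Poly_Mapping.keys p" unfolding Pge_def by (auto simp: mdeg_def)
  then show "Poly_Mapping.lookup p 0 = 0" by (simp add: in_keys_iff)
next
  assume "Poly_Mapping.lookup p 0 = 0"
  then have "\<And>m. m \<in> Poly_Mapping.keys p \<Longrightarrow> m \<noteq> 0" by (auto simp: in_keys_iff)
  then show "Pge 1 p" unfolding Pge_def using mdeg_zero_iff by (metis less_one not_le)
qed

lemma Pge_xvar: "Pge 1 (xvar w)"
  by (simp add: Pge_def xvar_def mdeg_single)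

lemma homog1_Pge: "homog 1 p \<Longrightarrow> Pge 1 p"
  by (simp add: homog_def Pge_def mdeg_def)

lemma Pge_xmon:
  assumes "finite F" "F \<noteq> {}" shows "Pge 1 (xmon F :: ('w, 'k::field) mpoly)"
proof -
  obtain w where w: "w \<in> F" using assms by blast
  have "xmon F = (xvar w :: ('w, 'k) mpoly) * xmon (F - {w})"
    unfolding xmon_def using assms(1) w by (simp add: prod.remove)
  then show ?thesis using Pge_mult[OF Pge_xvar Pge_0, of w "xmon (F - {w}) :: ('w, 'k) mpoly"] by simp
qed

definition deg1 :: "('w, 'k::field) mpoly \<Rightarrow> ('w, 'k) mpoly" where
  "deg1 p = Abs_poly_mapping (\<lambda>m. if mdeg m = 1 then Poly_Mapping.lookup p m else 0)"

lemma lookup_deg1: "Poly_Mapping.lookup (deg1 p) m = (if mdeg m = 1 then Poly_Mapping.lookup p m else 0)"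
proof -
  have "finite {m. (if mdeg m = 1 then Poly_Mapping.lookup p m else 0) \<noteq> 0}"
    by (rule finite_subset[of _ "Poly_Mapping.keys p"]) (auto simp: in_keys_iff)
  then show ?thesis unfolding deg1_def by simp
qed

lemma deg1_add: "deg1 (p + q) = deg1 p + deg1 q"
  by (rule poly_mapping_eqI) (simp add: lookup_deg1 lookup_add)

lemma deg1_zero [simp]: "deg1 0 = 0"
  by (rule poly_mapping_eqI) (simp add: lookup_deg1)

lemma deg1_sum: "deg1 (sum f S) = (\<Sum>i\<in>S. deg1 (f i))"
  by (induction S rule: infinite_finite_induct) (simp_all add: deg1_add)

lemma deg1_homog: "homog 1 p \<Longrightarrow> deg1 p = p"
  unfolding homog_def
  by (rule poly_mapping_eqI) (auto simp: lookup_deg1 mdeg_def in_keys_iff)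

lemma deg1_Pge2:
  assumes "Pge 2 p" shows "deg1 p = 0"
proof (rule poly_mapping_eqI)
  fix k
  show "Poly_Mapping.lookup (deg1 p) k = Poly_Mapping.lookup 0 k"
  proof (cases "mdeg k = 1")
    case True
    then have "k \<notin> Poly_Mapping.keys p" using assms unfolding Pge_def by fastforce
    then show ?thesis using True by (simp add: lookup_deg1 in_keys_iff)
  qed (simp add: lookup_deg1)
qed

lemma homog_pscale: "homog n p \<Longrightarrow> homog n (pscale c p)"
  unfolding homog_def using keys_pscale by blast

lemma deg1_mult_homog1:
  assumes "homog 1 t"
  shows "deg1 (c * t) = pscale (Poly_Mapping.lookup c 0) t"
proof -
  define c0 where "c0 = Poly_Mapping.lookup c 0"
  define r where "r = c - Poly_Mapping.single 0 c0"
  have "Poly_Mapping.lookup r 0 = 0" by (simp add: r_def c0_def lookup_minus)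
  then have "Pge 1 r" using Pge_1_iff by blast
  then have "Pge (1 + 1) (r * t)" using Pge_mult homog1_Pge[OF assms] by blast
  then have "Pge 2 (r * t)" by (simp only: one_add_one)
  then have r0: "deg1 (r * t) = 0" by (rule deg1_Pge2)
  have "c * t = pscale c0 t + r * t" by (simp add: r_def pscale_conv algebra_simps)
  then have "deg1 (c * t) = deg1 (pscale c0 t)" by (simp add: deg1_add r0)
  also have "\<dots> = pscale c0 t" by (rule deg1_homog[OF homog_pscale[OF assms]])
  finally show ?thesis by (simp add: c0_def)
qed


subsection \<open>Evaluation kills things\<close>

lemma lookup_xvar: "Poly_Mapping.lookup (xvar u :: ('w, 'k::field) mpoly) m = (if m = Poly_Mapping.single u 1 then 1 else 0)"
  by (simp add: xvar_def lookup_single when_def eq_commute)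

lemma single1_inj: "Poly_Mapping.single u (1::nat) = Poly_Mapping.single v 1 \<longleftrightarrow> u = v"
  by (metis lookup_single_eq lookup_single_not_eq one_neq_zero)

lemma single1_inj' [simp]: "Poly_Mapping.single u (Suc 0) = Poly_Mapping.single v (Suc 0) \<longleftrightarrow> u = v"
  using single1_inj by simp

lemma hom1_expand:
  assumes fW: "finite W" and t: "t \<in> polyring W" and h: "homog 1 t"
  shows "t = (\<Sum>u\<in>W. pscale (Poly_Mapping.lookup t (Poly_Mapping.single u 1)) (xvar u))"
proof (rule poly_mapping_eqI)
  fix m
  have L: "Poly_Mapping.lookup (\<Sum>u\<in>W. pscale (Poly_Mapping.lookup t (Poly_Mapping.single u 1)) (xvar u)) m
     = (\<Sum>u\<in>W. (if m = Poly_Mapping.single u 1 then Poly_Mapping.lookup t (Poly_Mapping.single u 1) else 0))"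
    unfolding lookup_sum lookup_pscale lookup_xvar by (intro sum.cong refl) simp
  show "Poly_Mapping.lookup t m = Poly_Mapping.lookup (\<Sum>u\<in>W. pscale (Poly_Mapping.lookup t (Poly_Mapping.single u 1)) (xvar u)) m"
  proof (cases "\<exists>u0\<in>W. m = Poly_Mapping.single u0 1")
    case True
    then obtain u0 where u0: "u0 \<in> W" "m = Poly_Mapping.single u0 1" by blast
    have "(\<Sum>u\<in>W. (if m = Poly_Mapping.single u 1 then Poly_Mapping.lookup t (Poly_Mapping.single u 1) else 0))
        = (\<Sum>u\<in>W. (if u = u0 then Poly_Mapping.lookup t (Poly_Mapping.single u 1) else 0))"
      using u0 by (intro sum.cong refl) (metis single1_inj)
    also have "\<dots> = Poly_Mapping.lookup t m" using u0 fW by simp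
    finally show ?thesis using L by simp
  next
    case False
    then have "(\<Sum>u\<in>W. (if m = Poly_Mapping.single u 1 then Poly_Mapping.lookup t (Poly_Mapping.single u 1) else 0)) = 0"
      by (intro sum.neutral) auto
    moreover have "m \<notin> Poly_Mapping.keys t"
    proof
      assume m: "m \<in> Poly_Mapping.keys t"
      then have "mdeg m = 1" using h unfolding homog_def mdeg_def by blast
      then obtain u where u: "m = Poly_Mapping.single u 1" using mdeg_one_single by blast
      then have "u \<in> W" using t m unfolding polyring_def by auto
      then show False using False u by blast
    qed
    ultimately show ?thesis using L by (simp add: in_keys_iff)
  qed
qed

lemma ev_hom1:
  assumes fW: "finite W" and t: "t \<in> polyring W" and h: "homog 1 t"
  shows "ev a t = monom (\<Sum>u\<in>W. Poly_Mapping.lookup t (Poly_Mapping.single u 1) * a u) 1"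
proof -
  have "ev a t = ev a (\<Sum>u\<in>W. pscale (Poly_Mapping.lookup t (Poly_Mapping.single u 1)) (xvar u))"
    using hom1_expand[OF assms] by simp
  also have "\<dots> = (\<Sum>u\<in>W. monom (Poly_Mapping.lookup t (Poly_Mapping.single u 1) * a u) 1)"
    by (simp add: ev_sum ev_pscale ev_xvar smult_monom)
  also have "\<dots> = monom (\<Sum>u\<in>W. Poly_Mapping.lookup t (Poly_Mapping.single u 1) * a u) 1"
    by (simp add: monom_sum)
  finally show ?thesis .
qed

lemma ev_SR_zero:
  assumes a0: "\<And>u. u \<notin> F0 \<Longrightarrow> a u = 0" and cl: "\<And>G. G \<subseteq> F0 \<Longrightarrow> G \<in> L"
    and s: "s \<in> SR L W"
  shows "ev a s = 0"
  unfolding ev_def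
proof (rule sum.neutral, rule ballI)
  fix m assume m: "m \<in> Poly_Mapping.keys s"
  then have "Poly_Mapping.keys m \<notin> L" using s by (simp add: SR_def)
  then have "\<not> Poly_Mapping.keys m \<subseteq> F0" using cl by blast
  then obtain u where u: "u \<in> Poly_Mapping.keys m" "u \<notin> F0" by blast
  then have "a u ^ Poly_Mapping.lookup m u = 0" using a0 by (simp add: in_keys_iff)
  then have "(\<Prod>w\<in>Poly_Mapping.keys m. a w ^ Poly_Mapping.lookup m w) = 0"
    using u(1) by (intro prod_zero) auto
  then show "smult (Poly_Mapping.lookup s m) (emon a m) = 0" by (simp add: emon_def)
qed

lemma ev_ideal_gen_zero:
  assumes "\<And>t. t \<in> X \<Longrightarrow> ev a t = 0" and "p \<in> ideal_gen R X"
  shows "ev a p = 0"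
proof -
  obtain c F where p: "p = (\<Sum>x\<in>F. c x * x)" and F: "F \<subseteq> X"
    using assms(2) unfolding ideal_gen_def by blast
  have "ev a p = (\<Sum>x\<in>F. ev a (c x) * ev a x)" by (simp add: p ev_sum ev_mult)
  also have "\<dots> = 0" using F assms(1) by (intro sum.neutral) auto
  finally show ?thesis .
qed

lemma lsop_no_kill:
  assumes lsop: "is_lsop W I th d"
    and kI: "\<And>p. p \<in> I \<Longrightarrow> ev a p = 0"
    and kth: "\<And>t. t \<in> set th \<Longrightarrow> ev a t = 0"
    and w: "w \<in> W" and aw: "a w \<noteq> 0"
  shows False
proof -
  obtain B where fB: "finite B" and BW: "B \<subseteq> polyring W"
    and red: "\<forall>p\<in>polyring W. \<exists>q\<in>module.span pscale B. p - q \<in> setsum I (ideal_gen (polyring W) (set th))"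
    using lsop unfolding is_lsop_def by blast
  define M where "M = Max (insert 0 ((\<lambda>b. degree (ev a b)) ` B))"
  have degB: "degree (ev a b) \<le> M" if "b \<in> B" for b
    unfolding M_def using fB that by (intro Max_ge) auto
  have degspan: "degree (ev a q) \<le> M" if q: "q \<in> pv.span B" for q
  proof -
    obtain t r where t: "finite t" "t \<subseteq> B" and qe: "q = (\<Sum>b\<in>t. pscale (r b) b)"
      using q unfolding pv.span_explicit by blast
    have "ev a q = (\<Sum>b\<in>t. smult (r b) (ev a b))" by (simp add: qe ev_sum ev_pscale)
    moreover have "degree (\<Sum>b\<in>t. smult (r b) (ev a b)) \<le> M"
      using t degB by (intro degree_sum_le) (auto intro: order.trans[OF degree_smult_le])
    ultimately show ?thesis by simp
  qed
  define p where "p = (xvar w :: ('a, 'b) mpoly) ^ (Suc M)"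
  have "p \<in> polyring W" unfolding p_def by (intro polyring_power polyring_xvar w)
  then obtain q where q: "q \<in> pv.span B" and pq: "p - q \<in> setsum I (ideal_gen (polyring W) (set th))"
    using red by blast
  have "ev a (p - q) = 0"
    using pq kI ev_ideal_gen_zero[OF kth] unfolding setsum_def by (auto simp: ev_add)
  then have "ev a p = ev a q" by (simp add: ev_diff)
  moreover have "ev a p = monom (a w ^ Suc M) (Suc M)" unfolding p_def by (rule ev_xvar_power)
  moreover have "degree (monom (a w ^ Suc M) (Suc M)) = Suc M"
    by (rule degree_monom_eq) (use aw in simp)
  ultimately have "degree (ev a q) = Suc M" by simp
  with degspan[OF q] show False by simp
qed


definition Rf :: "'w set \<Rightarrow> ('w, 'k::field) mpoly \<Rightarrow> ('w, 'k) mpoly" where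
  "Rf F0 t = (\<Sum>u\<in>F0. pscale (Poly_Mapping.lookup t (Poly_Mapping.single u 1)) (xvar u))"

lemma key_span:
  fixes th :: "('w, 'k::field) mpoly list"
  assumes lsop: "is_lsop W (SR L W) th d"
    and cl: "\<And>G. G \<subseteq> F0 \<Longrightarrow> G \<in> L" and F0W: "F0 \<subseteq> W" and fW: "finite W"
    and hth: "\<And>t. t \<in> set th \<Longrightarrow> t \<in> polyring W \<and> homog 1 t"
    and w0: "w0 \<in> F0"
  shows "(xvar w0 :: ('w, 'k) mpoly) \<in> pv.span (Rf F0 ` set th)"
proof (rule ccontr)
  define y where "y = (xvar w0 :: ('w, 'k) mpoly)"
  assume "xvar w0 \<notin> pv.span (Rf F0 ` set th)"
  then have ny: "y \<notin> pv.span (Rf F0 ` set th)" by (simp add: y_def)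
  obtain b where b: "b \<subseteq> Rf F0 ` set th" "pv.independent b" "Rf F0 ` set th \<subseteq> pv.span b"
    using pv.maximal_independent_subset by blast
  have "pv.span b \<subseteq> pv.span (Rf F0 ` set th)" using b(1) by (rule pv.span_mono)
  then have nyb: "y \<notin> pv.span b" using ny by blast
  then have nyb': "y \<notin> b" using pv.span_base by blast
  have indep: "pv.independent (insert y b)" by (rule pv.independent_insertI[OF nyb b(2)])
  define C where "C = pv.extend_basis (insert y b)"
  have iC: "pv.independent C" unfolding C_def by (rule pv.independent_extend_basis[OF indep])
  have sC: "pv.span C = UNIV" unfolding C_def by (rule pv.span_extend_basis[OF indep])
  have subC: "insert y b \<subseteq> C" unfolding C_def by (rule pv.extend_basis_superset[OF indep])
  define \<phi> where "\<phi> v = pv.representation C v y" for v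
  have \<phi>y: "\<phi> y = 1"
    unfolding \<phi>_def using pv.representation_basis[OF iC] subC by auto
  have \<phi>b: "\<phi> v = 0" if v: "v \<in> pv.span b" for v
  proof -
    have "pv.representation C v = pv.representation b v"
      using pv.representation_extend[OF iC v] subC by blast
    moreover have "pv.representation b v y = 0"
      using pv.representation_ne_zero nyb' by blast
    ultimately show ?thesis unfolding \<phi>_def by simp
  qed
  have \<phi>lin: "\<phi> (Rf F0 t) = (\<Sum>u\<in>F0. Poly_Mapping.lookup t (Poly_Mapping.single u 1) * \<phi> (xvar u))" for t
    unfolding Rf_def \<phi>_def
    by (simp add: pv.representation_sum[OF iC] pv.representation_scale[OF iC] sC)
  define a where "a u = (if u \<in> F0 then \<phi> (xvar u) else 0)" for u
  have a0: "a u = 0" if "u \<notin> F0" for u using that by (simp add: a_def)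
  have kth: "ev a t = 0" if t: "t \<in> set th" for t
  proof -
    have "(\<Sum>u\<in>W. Poly_Mapping.lookup t (Poly_Mapping.single u 1) * a u)
        = (\<Sum>u\<in>F0. Poly_Mapping.lookup t (Poly_Mapping.single u 1) * a u)"
      using F0W fW a0 by (intro sum.mono_neutral_right) auto
    also have "\<dots> = \<phi> (Rf F0 t)" unfolding \<phi>lin a_def by (intro sum.cong) auto
    also have "\<dots> = 0" using t b(3) by (intro \<phi>b) auto
    finally have S0: "(\<Sum>u\<in>W. Poly_Mapping.lookup t (Poly_Mapping.single u 1) * a u) = 0" .
    have "ev a t = monom (\<Sum>u\<in>W. Poly_Mapping.lookup t (Poly_Mapping.single u 1) * a u) 1"
      using hth[OF t] by (intro ev_hom1[OF fW]) auto
    then show ?thesis by (simp only: S0 monom_eq_0)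
  qed
  have kI: "ev a p = 0" if "p \<in> SR L W" for p
    by (rule ev_SR_zero[OF _ cl that]) (use a0 in auto)
  have "a w0 \<noteq> 0" using w0 \<phi>y by (simp add: a_def y_def)
  then show False using lsop_no_kill[OF lsop kI kth] F0W w0 by blast
qed


lemma dim_mono_gen:
  fixes V A F :: "('w, 'k::field) mpoly set"
  assumes "V \<subseteq> pv.span A" "A \<subseteq> pv.span F" "finite F"
  shows "pv.dim V \<le> pv.dim A"
proof -
  obtain B where B: "B \<subseteq> A" "pv.independent B" "A \<subseteq> pv.span B" "card B = pv.dim A"
    using pv.basis_exists by blast
  have "B \<subseteq> pv.span F" using B(1) assms(2) by blast
  then have fB: "finite B" using pv.independent_span_bound[OF assms(3) B(2)] by blast
  have "pv.span A \<subseteq> pv.span B" using B(3) pv.span_mono pv.span_span by blast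
  then have "V \<subseteq> pv.span B" using assms(1) by blast
  then have "pv.dim V \<le> card B" using fB by (rule pv.dim_le_card)
  then show ?thesis using B(4) by simp
qed

lemma dim_union_le:
  fixes P Q :: "('w, 'k::field) mpoly set"
  assumes "finite P" "finite Q"
  shows "pv.dim (P \<union> Q) \<le> pv.dim P + card Q"
proof -
  obtain B where B: "B \<subseteq> P" "pv.independent B" "P \<subseteq> pv.span B" "card B = pv.dim P"
    using pv.basis_exists by blast
  have fB: "finite B" using B(1) assms(1) finite_subset by blast
  have "P \<union> Q \<subseteq> pv.span (B \<union> Q)"
    using B(3) pv.span_mono[of B "B \<union> Q"] pv.span_superset[of "B \<union> Q"] by blast
  then have "pv.dim (P \<union> Q) \<le> card (B \<union> Q)" using fB assms(2) by (intro pv.dim_le_card) auto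
  also have "\<dots> \<le> card B + card Q" by (rule card_Un_le)
  finally show ?thesis using B(4) by simp
qed

lemma xvar_inj: "inj (xvar :: 'w \<Rightarrow> ('w, 'k::field) mpoly)"
proof (rule injI)
  fix u v assume "(xvar u :: ('w, 'k) mpoly) = xvar v"
  then have "Poly_Mapping.lookup (xvar u :: ('w, 'k) mpoly) (Poly_Mapping.single u 1)
           = Poly_Mapping.lookup (xvar v :: ('w, 'k) mpoly) (Poly_Mapping.single u 1)" by simp
  then show "u = v" by (simp add: lookup_xvar single1_inj split: if_splits)
qed

lemma xvar_indep:
  assumes fW: "finite W"
  shows "pv.independent (xvar ` W :: ('w, 'k::field) mpoly set)"
proof (rule pv.independent_if_scalars_zero)
  show "finite (xvar ` W :: ('w, 'k) mpoly set)" using fW by simp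
  fix f and x :: "('w, 'k) mpoly" assume eq: "(\<Sum>x\<in>(xvar ` W :: ('w, 'k) mpoly set). pscale (f x) x) = 0" and x: "x \<in> xvar ` W"
  then obtain u where u: "u \<in> W" "x = xvar u" by blast
  have "0 = Poly_Mapping.lookup (\<Sum>x\<in>(xvar ` W :: ('w, 'k) mpoly set). pscale (f x) x) (Poly_Mapping.single u 1)"
    using eq by simp
  also have "\<dots> = (\<Sum>y\<in>(xvar ` W :: ('w, 'k) mpoly set). (if y = xvar u then f y else 0))"
    unfolding lookup_sum lookup_pscale
  proof (intro sum.cong refl)
    fix y assume "y \<in> (xvar ` W :: ('w, 'k) mpoly set)"
    then obtain v where v: "y = xvar v" by blast
    show "f y * Poly_Mapping.lookup y (Poly_Mapping.single u 1) = (if y = xvar u then f y else 0)"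
      using injD[OF xvar_inj[where 'k='k], of u v] injD[OF xvar_inj[where 'k='k], of v u] unfolding v
      by (auto simp: lookup_xvar single1_inj)
  qed
  also have "\<dots> = f x" using u fW by simp
  finally show "f x = 0" by simp
qed

lemma dim_xvar:
  assumes "finite W" shows "pv.dim (xvar ` W :: ('w, 'k::field) mpoly set) = card W"
proof -
  have "card (xvar ` W :: ('w, 'k) mpoly set) = card W"
    by (rule card_image) (rule inj_on_subset[OF xvar_inj subset_UNIV])
  then show ?thesis using pv.dim_eq_card_independent[OF xvar_indep[where 'k='k, OF assms]] by simp
qed

lemma dim_bound:
  fixes T :: "('w, 'k::field) mpoly set"
  assumes fW: "finite W" and SW: "S \<subseteq> W" and F0W: "F0 \<subseteq> W" and SF: "S \<inter> F0 = {}"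
    and fT: "finite T" and hT: "\<And>t. t \<in> T \<Longrightarrow> t \<in> polyring W \<and> homog 1 t"
    and sp: "\<And>w. w \<in> F0 \<Longrightarrow> xvar w \<in> pv.span (Rf F0 ` T)"
  shows "card S + card F0 \<le> pv.dim (xvar ` S \<union> T)"
proof -
  define R where "R = W - F0 - S"
  define P where "P = (xvar ` S \<union> T) \<union> (xvar ` R :: ('w, 'k) mpoly set)"
  have fR: "finite R" using fW by (simp add: R_def)
  have XP: "xvar ` S \<union> xvar ` R \<subseteq> pv.span P" using pv.span_superset[of P] by (auto simp: P_def)
  have RfP: "Rf F0 t \<in> pv.span P" if t: "t \<in> T" for t
  proof -
    have "t = (\<Sum>u\<in>W. pscale (Poly_Mapping.lookup t (Poly_Mapping.single u 1)) (xvar u))"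
      using hT[OF t] by (intro hom1_expand[OF fW]) auto
    also have "\<dots> = Rf F0 t + (\<Sum>u\<in>W - F0. pscale (Poly_Mapping.lookup t (Poly_Mapping.single u 1)) (xvar u))"
      unfolding Rf_def using sum.subset_diff[OF F0W fW] by (simp add: add.commute)
    finally have eq: "Rf F0 t = t - (\<Sum>u\<in>W - F0. pscale (Poly_Mapping.lookup t (Poly_Mapping.single u 1)) (xvar u))"
      by (simp add: algebra_simps)
    have "t \<in> pv.span P" using t pv.span_superset[of P] by (auto simp: P_def)
    moreover have "(\<Sum>u\<in>W - F0. pscale (Poly_Mapping.lookup t (Poly_Mapping.single u 1)) (xvar u)) \<in> pv.span P"
    proof (intro pv.span_sum pv.span_scale)
      fix u assume "u \<in> W - F0"
      then have "u \<in> S \<or> u \<in> R" by (auto simp: R_def)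
      then show "xvar u \<in> pv.span P" using XP by blast
    qed
    ultimately show ?thesis unfolding eq by (rule pv.span_diff)
  qed
  then have "pv.span (Rf F0 ` T) \<subseteq> pv.span P"
    using pv.span_mono[of "Rf F0 ` T" "pv.span P"] pv.span_span by blast
  then have "xvar ` F0 \<subseteq> pv.span P" using sp by blast
  moreover have "W = F0 \<union> S \<union> R" using SW F0W by (auto simp: R_def)
  ultimately have WP: "xvar ` W \<subseteq> pv.span P" using XP by blast
  have fP: "finite P" using fT SW fW fR by (auto simp: P_def intro: finite_subset)
  have "card W = pv.dim (xvar ` W :: ('w, 'k) mpoly set)" using dim_xvar[where 'k='k, OF fW] by simp
  also have "\<dots> \<le> pv.dim P" using WP pv.span_superset[of P] fP by (intro dim_mono_gen) auto
  also have "\<dots> \<le> pv.dim (xvar ` S \<union> T) + card (xvar ` R :: ('w, 'k) mpoly set)"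
    unfolding P_def using fT SW fW fR by (intro dim_union_le) (auto intro: finite_subset)
  also have "\<dots> \<le> pv.dim (xvar ` S \<union> T) + card R" using card_image_le[OF fR, of xvar] by simp
  finally have "card W \<le> pv.dim (xvar ` S \<union> T) + card R" .
  moreover have "card W = card F0 + card S + card R"
  proof -
    have "card W = card (F0 \<union> S \<union> R)" using \<open>W = F0 \<union> S \<union> R\<close> by simp
    also have "\<dots> = card (F0 \<union> S) + card R"
      using fW SW F0W by (intro card_Un_disjoint) (auto simp: R_def intro: finite_subset)
    also have "card (F0 \<union> S) = card F0 + card S"
      using fW SW F0W SF by (intro card_Un_disjoint) (auto intro: finite_subset)
    finally show ?thesis .
  qed
  ultimately show ?thesis by simp
qed


subsection \<open>The two degree-one parts\<close>

lemma ideal_gen_Pge: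
  assumes "\<And>x. x \<in> X \<Longrightarrow> Pge k x" "p \<in> ideal_gen R X"
  shows "Pge k p"
proof -
  obtain c F where p: "p = (\<Sum>x\<in>F. c x * x)" and F: "F \<subseteq> X"
    using assms(2) unfolding ideal_gen_def by blast
  show ?thesis unfolding p
    using F assms(1) Pge_mult[OF Pge_0] by (intro Pge_sum) fastforce
qed

lemma ideal_gen_polyring:
  assumes "X \<subseteq> polyring W" "p \<in> ideal_gen (polyring W) X"
  shows "p \<in> polyring W"
proof -
  obtain c F where p: "p = (\<Sum>x\<in>F. c x * x)" and F: "F \<subseteq> X" and c: "\<forall>x\<in>F. c x \<in> polyring W"
    using assms(2) unfolding ideal_gen_def by blast
  show ?thesis unfolding p using F c assms(1) by (intro polyring_sum polyring_mult) auto
qed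

lemma ideal_gen_base:
  assumes "x \<in> X" shows "x \<in> ideal_gen (polyring W) X"
  unfolding ideal_gen_def
  by (rule CollectI, rule exI[of _ "\<lambda>_. 1"], rule exI[of _ "{x}"]) (use assms in auto)

lemma ideal_gen_zero: "0 \<in> ideal_gen (polyring W) X"
  unfolding ideal_gen_def
  by (rule CollectI, rule exI[of _ "\<lambda>_. 1"], rule exI[of _ "{}"]) auto

lemma SR_Pge1:
  assumes "{} \<in> D" "u \<in> SR D W" shows "Pge 1 u"
proof -
  have "0 \<notin> Poly_Mapping.keys u" using assms unfolding SR_def by auto
  then show ?thesis using Pge_1_iff by (metis in_keys_iff)
qed

lemma deg1_SR:
  assumes Lsc: "\<And>w. w \<in> W \<Longrightarrow> {w} \<in> L" and s: "s \<in> SR L W"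
  shows "deg1 s = 0"
proof (rule poly_mapping_eqI)
  fix m
  show "Poly_Mapping.lookup (deg1 s) m = Poly_Mapping.lookup 0 m"
  proof (cases "mdeg m = 1")
    case True
    then obtain w where w: "m = Poly_Mapping.single w 1" using mdeg_one_single by blast
    have "m \<notin> Poly_Mapping.keys s"
    proof
      assume m: "m \<in> Poly_Mapping.keys s"
      then have "Poly_Mapping.keys m \<subseteq> W" "Poly_Mapping.keys m \<notin> L"
        using s unfolding SR_def polyring_def by auto
      then show False using Lsc w by simp
    qed
    then show ?thesis by (simp add: lookup_deg1 in_keys_iff)
  qed (simp add: lookup_deg1)
qed

lemma degpart_B:
  fixes th :: "('w, 'k::field) mpoly list"
  assumes D0: "{} \<in> D" and Lsc: "\<And>w. w \<in> W \<Longrightarrow> {w} \<in> L"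
    and JP: "\<And>q. q \<in> J \<Longrightarrow> Pge 1 q"
    and th: "\<And>t. t \<in> set th \<Longrightarrow> homog 1 t"
  shows "degpart (setsum (ideal_prod (polyring W) (SR D W) J) (setsum (SR L W) (ideal_gen (polyring W) (set th)))) 1
         \<subseteq> pv.span (set th)"
proof
  fix p assume "p \<in> degpart (setsum (ideal_prod (polyring W) (SR D W) J) (setsum (SR L W) (ideal_gen (polyring W) (set th)))) 1"
  then obtain a s c where hp: "homog 1 p" and p: "p = a + (s + c)"
    and a: "a \<in> ideal_prod (polyring W) (SR D W) J" and s: "s \<in> SR L W"
    and c: "c \<in> ideal_gen (polyring W) (set th)"
    unfolding degpart_def setsum_def by blast
  have "Pge 2 a"
    using a unfolding ideal_prod_def
  proof (rule ideal_gen_Pge[rotated])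
    fix x assume "x \<in> {u * v |u v. u \<in> SR D W \<and> v \<in> J}"
    then obtain u v where x: "x = u * v" "u \<in> SR D W" "v \<in> J" by blast
    have "Pge (1 + 1) x" unfolding x(1) by (rule Pge_mult[OF SR_Pge1[OF D0 x(2)] JP[OF x(3)]])
    then show "Pge 2 x" by (simp only: one_add_one)
  qed
  then have a0: "deg1 a = 0" by (rule deg1_Pge2)
  have s0: "deg1 s = 0" by (rule deg1_SR[OF Lsc s])
  obtain cc F where ce: "c = (\<Sum>x\<in>F. cc x * x)" and F: "F \<subseteq> set th"
    using c unfolding ideal_gen_def by blast
  have "deg1 c = (\<Sum>x\<in>F. pscale (Poly_Mapping.lookup (cc x) 0) x)"
    unfolding ce deg1_sum using F th by (intro sum.cong refl deg1_mult_homog1) auto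
  also have "\<dots> \<in> pv.span (set th)"
    using F by (intro pv.span_sum pv.span_scale pv.span_base) auto
  finally have "deg1 c \<in> pv.span (set th)" .
  moreover have "p = deg1 p" using deg1_homog[OF hp] by simp
  ultimately show "p \<in> pv.span (set th)" using a0 s0 by (simp add: p deg1_add)
qed

lemma polyring_prod: "(\<And>i. i \<in> S \<Longrightarrow> f i \<in> polyring W) \<Longrightarrow> prod f S \<in> polyring W"
  by (induction S rule: infinite_finite_induct) (simp_all add: polyring_mult)

lemma xmon_polyring: "F \<subseteq> W \<Longrightarrow> xmon F \<in> polyring W"
  unfolding xmon_def by (intro polyring_prod polyring_xvar) auto

lemma homog1_span:
  assumes fW: "finite W" and "p \<in> polyring W" "homog 1 p"
  shows "p \<in> pv.span (xvar ` W)"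
proof -
  have "p = (\<Sum>u\<in>W. pscale (Poly_Mapping.lookup p (Poly_Mapping.single u 1)) (xvar u))"
    by (rule hom1_expand[OF assms])
  also have "\<dots> \<in> pv.span (xvar ` W)"
    by (intro pv.span_sum pv.span_scale pv.span_base) auto
  finally show ?thesis .
qed

lemma homog_xvar: "homog 1 (xvar w)"
  by (simp add: homog_def xvar_def)



interpretation fv: vector_space "fscale :: 'k::field \<Rightarrow> ('a \<Rightarrow> 'k) \<Rightarrow> _"
  by unfold_locales (auto simp: fscale_def fun_eq_iff algebra_simps)

lemma lk_empty: "lk D {} = D"
  by (auto simp: lk_def)

lemma rbetti_face:
  assumes "rbetti (TYPE('k::field)) D i = 1"
  shows "\<exists>G0\<in>D. int (card G0) = i + 1"
proof (rule ccontr)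
  assume na: "\<not> (\<exists>G0\<in>D. int (card G0) = i + 1)"
  have "{f :: 'a set \<Rightarrow> 'k. f \<in> chains D i \<and> bd D f = 0} \<subseteq> fv.span {}"
  proof
    fix f :: "'a set \<Rightarrow> 'k" assume "f \<in> {f. f \<in> chains D i \<and> bd D f = 0}"
    then have "\<forall>G. f G \<noteq> 0 \<longrightarrow> G \<in> D \<and> int (card G) = i + 1" by (simp add: chains_def)
    then have "f = 0" using na by (auto simp: fun_eq_iff)
    then show "f \<in> fv.span {}" by (simp add: fv.span_zero)
  qed
  then have "fv.dim {f :: 'a set \<Rightarrow> 'k. f \<in> chains D i \<and> bd D f = 0} \<le> card ({} :: ('a set \<Rightarrow> 'k) set)"
    by (intro fv.dim_le_card) auto
  then show False using assms unfolding rbetti_def by simp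
qed

lemma hball_sphere: "hball_bd K G B d \<Longrightarrow> F \<in> G - B \<Longrightarrow> hsphere K (lk G F) (d - int (card F))"
  by (erule hball_bd.cases) simp

lemma hball_sc: "hball_bd K G B d \<Longrightarrow> simplicial_complex G"
  by (erule hball_bd.cases) simp

lemma get_F0:
  fixes G :: "'w::linorder set set" and \<sigma> :: "'w set \<Rightarrow> 'v set"
  assumes ht: "htriang TYPE('k::field) G \<sigma> V" and E: "E \<in> G"
    and cV: "int (card V) - int (card (\<sigma> E)) = 1"
  shows "\<exists>F0. F0 \<in> lk G E \<and> (\<forall>w\<in>F0. \<sigma> ({w} \<union> E) \<noteq> V) \<and> card V - card E \<le> card F0 + 1"
proof -
  have scG: "simplicial_complex G" and fV: "finite V" and sV: "\<forall>F\<in>G. \<sigma> F \<subseteq> V"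
    using ht by (auto simp: htriang_def)
  have e0: "{} \<in> G" using scG E unfolding simplicial_complex_def by blast
  show ?thesis
  proof (cases "\<sigma> E = {}")
    case True
    then have "card V = 1" using cV by simp
    moreover have "{} \<in> lk G E" using e0 E by (simp add: lk_def)
    ultimately show ?thesis by (intro exI[of _ "{}"]) auto
  next
    case False
    define U where "U = \<sigma> E"
    have UV: "U \<subseteq> V" using sV E by (simp add: U_def)
    obtain B where hb: "hball_bd TYPE('k) (restr G \<sigma> U) B (int (card U) - 1)"
      and int: "restr G \<sigma> U - B = {F \<in> G. \<sigma> F = U}"
    proof -
      have "\<forall>U. U \<subseteq> V \<longrightarrow> U \<noteq> {} \<longrightarrow>
        (\<exists>B. hball_bd TYPE('k) (restr G \<sigma> U) B (int (card U) - 1) \<and>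
             restr G \<sigma> U - B = {F \<in> G. \<sigma> F = U})" using ht unfolding htriang_def by (elim conjE)
      then have "\<exists>B. hball_bd TYPE('k) (restr G \<sigma> U) B (int (card U) - 1) \<and>
             restr G \<sigma> U - B = {F \<in> G. \<sigma> F = U}" using UV False unfolding U_def by blast
      then show ?thesis using that by blast
    qed
    define R where "R = restr G \<sigma> U"
    have ER: "E \<in> R - B" using int E by (auto simp: R_def U_def)
    from hb have scR: "simplicial_complex R"
      and sph: "\<forall>F\<in>R - B. hsphere TYPE('k) (lk R F) (int (card U) - 1 - int (card F))"
      unfolding R_def using hball_sc[OF hb] hball_sphere[OF hb] by auto
    have hs: "hsphere TYPE('k) (lk R E) (int (card U) - 1 - int (card E))"
      using sph ER by blast
    then have "{} \<in> lk R E" and "\<forall>i. rbetti TYPE('k) (lk (lk R E) {}) i =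
        (if i = int (card U) - 1 - int (card E) - int (card ({}::'w set)) then 1 else 0)"
      unfolding hsphere_def by blast+
    then have "rbetti TYPE('k) (lk R E) (int (card U) - 1 - int (card E)) = 1"
      by (simp add: lk_empty)
    then have "\<exists>G0\<in>lk R E. int (card G0) = int (card U) - 1 - int (card E) + 1"
      by (rule rbetti_face)
    then obtain G0 where G0: "G0 \<in> lk R E" and cG0: "int (card G0) = int (card U) - int (card E)"
      by auto
    have RG: "R \<subseteq> G" by (auto simp: R_def restr_def)
    have G0E: "G0 \<union> E \<in> R" "G0 \<inter> E = {}" "G0 \<in> R" using G0 by (simp_all add: lk_def)
    have "G0 \<in> lk G E" unfolding lk_def using G0E RG by blast
    moreover have "\<forall>w\<in>G0. \<sigma> ({w} \<union> E) \<noteq> V"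
    proof
      fix w assume w: "w \<in> G0"
      have cl: "\<forall>F\<in>R. \<forall>G. G \<subseteq> F \<longrightarrow> G \<in> R" using scR by (simp add: simplicial_complex_def)
      have "{w} \<union> E \<subseteq> G0 \<union> E" using w by blast
      then have "{w} \<union> E \<in> R" using cl G0E(1) by blast
      then have "\<sigma> ({w} \<union> E) \<subseteq> U" by (simp add: R_def restr_def)
      moreover have "card U < card V" using cV by (simp add: U_def)
      ultimately show "\<sigma> ({w} \<union> E) \<noteq> V"
      proof (intro notI)
        assume "\<sigma> ({w} \<union> E) \<subseteq> U" "card U < card V" "\<sigma> ({w} \<union> E) = V"
        then have "V \<subseteq> U" by simp
        then have "card V \<le> card U" using fV UV finite_subset by (intro card_mono) auto
        then show False using \<open>card U < card V\<close> by simp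
      qed
    qed
    moreover have "card V - card E \<le> card G0 + 1" using cG0 cV by (simp add: U_def)
    ultimately show ?thesis by blast
  qed
qed


theorem lemma5p6:
  fixes G :: "'w::linorder set set" and \<sigma> :: "'w set \<Rightarrow> 'v set" and V :: "'v set"
    and E :: "'w set" and th :: "('w, 'k::field) mpoly list" and D :: "'w set set"
  assumes "infinite (UNIV :: 'k set)"
    and "htriang TYPE('k) G \<sigma> V"
    and "quasi_geometric G \<sigma> V"
    and "E \<in> G"
    and "int (card V) - int (card (\<sigma> E)) = 1"
    and "lsop_lk G V E th"
    and "special \<sigma> V E th"
    and "simplicial_complex D" and "D \<subseteq> lk G E"
  shows "int (loc_restr_dim1 G \<sigma> V E th D)
           \<ge> int (card {v. {v} \<in> D \<and> \<sigma> ({v} \<union> E) = V}) - 1"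
proof -
  define L where "L = lk G E"
  define W where "W = verts L"
  define S where "S = {v. {v} \<in> D \<and> \<sigma> ({v} \<union> E) = V}"
  have scG: "simplicial_complex G" and fV: "finite V" using assms(2) by (simp_all add: htriang_def)
  have Gcl: "\<forall>F\<in>G. \<forall>H. H \<subseteq> F \<longrightarrow> H \<in> G" and fG: "finite G" and fF: "\<forall>F\<in>G. finite F"
    using scG by (simp_all add: simplicial_complex_def)
  have Lcl: "H \<in> L" if F: "F \<in> L" and H: "H \<subseteq> F" for F H
  proof -
    have "F \<in> G" "F \<inter> E = {}" "F \<union> E \<in> G" using F by (simp_all add: L_def lk_def)
    moreover have "H \<union> E \<subseteq> F \<union> E" using H by blast
    ultimately show ?thesis using Gcl H unfolding L_def lk_def by blast
  qed
  have LG: "L \<subseteq> G" by (auto simp: L_def lk_def)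
  have Lsc: "{w} \<in> L" if "w \<in> W" for w using that by (simp add: W_def verts_def)
  have fW: "finite W"
  proof (rule finite_subset)
    show "W \<subseteq> \<Union> G" using Lsc LG by blast
    show "finite (\<Union> G)" using fG fF by blast
  qed
  have FW: "F \<subseteq> W" if "F \<in> L" for F
  proof
    fix w assume "w \<in> F"
    then have "{w} \<subseteq> F" by blast
    then show "w \<in> W" using Lcl[OF that] by (simp add: W_def verts_def)
  qed
  have fL: "finite F" if "F \<in> L" for F using that LG fF by blast
  show ?thesis
  proof (cases "D = {}")
    case True
    then show ?thesis by simp
  next
    case False
    then have D0: "{} \<in> D" using assms(8) unfolding simplicial_complex_def by blast
    obtain F0 where F0L: "F0 \<in> L" and F0nint: "\<forall>w\<in>F0. \<sigma> ({w} \<union> E) \<noteq> V"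
      and F0c: "card V - card E \<le> card F0 + 1"
      using get_F0[OF assms(2) assms(4) assms(5)] unfolding L_def by blast
    have lsop: "is_lsop W (SR L W) th (card V - card E)"
      using assms(6) by (simp add: lsop_lk_def L_def W_def)
    have len: "length th = card V - card E" using lsop by (simp add: is_lsop_def)
    have hth: "t \<in> polyring W \<and> homog 1 t" if "t \<in> set th" for t
      using lsop that by (auto simp: is_lsop_def degpart_def)
    have F0W: "F0 \<subseteq> W" by (rule FW[OF F0L])
    have cl: "H \<in> L" if "H \<subseteq> F0" for H using Lcl[OF F0L that] .
    have sp: "xvar w \<in> pv.span (Rf F0 ` set th)" if "w \<in> F0" for w
      by (rule key_span[OF lsop cl F0W fW hth that])
    have SW: "S \<subseteq> W" using assms(9) Lsc by (auto simp: S_def W_def verts_def L_def)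
    have SF: "S \<inter> F0 = {}" using F0nint by (auto simp: S_def)
    have dimb: "card S + card F0 \<le> pv.dim (xvar ` S \<union> set th)"
      by (rule dim_bound[OF fW SW F0W SF _ hth sp]) simp
    define J where "J = (lfm_J G \<sigma> V E :: ('w, 'k) mpoly set)"
    define N where "N = lfm_N G E th"
    have Jdef: "J = ideal_gen (polyring W) {xmon F | F. F \<in> L \<and> \<sigma> (F \<union> E) = V}"
      by (simp add: J_def lfm_J_def L_def W_def)
    have Ndef: "N = setsum (SR L W) (ideal_gen (polyring W) (set th))"
      by (simp add: N_def lfm_N_def L_def W_def)
    define A where "A = degpart (setsum J N) 1"
    have N0: "0 \<in> N" unfolding Ndef setsum_def using ideal_gen_zero[of W "set th"]
      by (auto simp: SR_def intro!: exI[of _ 0])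
    have XA: "xvar ` S \<union> set th \<subseteq> A"
    proof
      fix x assume "x \<in> xvar ` S \<union> set th"
      then show "x \<in> A"
      proof
        assume "x \<in> xvar ` S"
        then obtain v where v: "v \<in> S" "x = xvar v" by blast
        have "xmon {v} = x" by (simp add: xmon_def v)
        moreover have "{v} \<in> L" "\<sigma> ({v} \<union> E) = V" using v(1) assms(9) by (auto simp: S_def L_def)
        ultimately have "x \<in> {xmon F | F. F \<in> L \<and> \<sigma> (F \<union> E) = V}" by blast
        then have "x \<in> J" unfolding Jdef by (rule ideal_gen_base)
        then have "x + 0 \<in> setsum J N" using N0 unfolding setsum_def by blast
        then show "x \<in> A" using homog_xvar unfolding A_def degpart_def v(2) by simp
      next
        assume x: "x \<in> set th"
        have "0 \<in> SR L W" by (simp add: SR_def)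
        then have "0 + x \<in> N" unfolding Ndef setsum_def using ideal_gen_base[OF x] by blast
        moreover have "0 \<in> J" unfolding Jdef by (rule ideal_gen_zero)
        ultimately have "0 + (0 + x) \<in> setsum J N" unfolding setsum_def by blast
        then show "x \<in> A" using hth[OF x] unfolding A_def degpart_def by simp
      qed
    qed
    have genW: "{xmon F | F. F \<in> L \<and> \<sigma> (F \<union> E) = V} \<subseteq> polyring W"
    proof
      fix x assume "x \<in> {xmon F | F. F \<in> L \<and> \<sigma> (F \<union> E) = V}"
      then obtain F where "x = xmon F" "F \<in> L" by blast
      then show "x \<in> polyring W" using FW xmon_polyring by blast
    qed
    have JW: "J \<subseteq> polyring W"
      unfolding Jdef using ideal_gen_polyring[OF genW] by blast
    have NW: "N \<subseteq> polyring W"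
    proof
      fix p assume "p \<in> N"
      then obtain s c where p: "p = s + c" "s \<in> SR L W" "c \<in> ideal_gen (polyring W) (set th)"
        unfolding Ndef setsum_def by blast
      have "s \<in> polyring W" using p(2) by (simp add: SR_def)
      moreover have "set th \<subseteq> polyring W" using hth by blast
      then have "c \<in> polyring W" using p(3) by (rule ideal_gen_polyring)
      ultimately show "p \<in> polyring W" using p(1) by (simp add: polyring_add)
    qed
    have AW: "A \<subseteq> pv.span (xvar ` W)"
    proof
      fix p assume "p \<in> A"
      then obtain j n where p: "p = j + n" "j \<in> J" "n \<in> N" and hp: "homog 1 p"
        unfolding A_def degpart_def setsum_def by blast
      have "p \<in> polyring W" using p JW NW polyring_add by blast
      then show "p \<in> pv.span (xvar ` W)" using homog1_span[OF fW _ hp] by blast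
    qed
    have dA: "pv.dim (xvar ` S \<union> set th) \<le> pv.dim A"
      using XA AW fW by (intro dim_mono_gen[OF _ AW]) (auto intro: pv.span_superset[THEN subsetD])
    have JP: "Pge 1 q" if "q \<in> J" for q
      using that unfolding Jdef
    proof (rule ideal_gen_Pge[rotated])
      fix x assume "x \<in> {xmon F |F. F \<in> L \<and> \<sigma> (F \<union> E) = V}"
      then obtain F where F: "x = xmon F" "F \<in> L" "\<sigma> (F \<union> E) = V" by blast
      have "F \<noteq> {}"
      proof
        assume "F = {}"
        then have "\<sigma> E = V" using F(3) by simp
        then show False using assms(5) by simp
      qed
      then show "Pge 1 x" unfolding F(1) by (rule Pge_xmon[OF fL[OF F(2)]])
    qed
    have Bsub: "degpart (setsum (ideal_prod (polyring W) (SR D W) J) N) 1 \<subseteq> pv.span (set th)"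
      unfolding Ndef by (rule degpart_B[OF D0 Lsc JP]) (use hth in auto)
    have dB: "pv.dim (degpart (setsum (ideal_prod (polyring W) (SR D W) J) N) 1) \<le> card (set th)"
      using Bsub by (intro pv.dim_le_card) auto
    have "card (set th) \<le> length th" by (rule card_length)
    have eq: "loc_restr_dim1 G \<sigma> V E th D = pv.dim A - pv.dim (degpart (setsum (ideal_prod (polyring W) (SR D W) J) N) 1)"
      by (simp add: loc_restr_dim1_def pdim_def A_def J_def N_def W_def L_def)
    show ?thesis unfolding eq S_def[symmetric]
      using dimb dA dB \<open>card (set th) \<le> length th\<close> len F0c by linarith
  qed
qed

end
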